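(* Let $\mathbb{K}$ be a field and let $\mathcal F=\{f_n(q)\}_{n=1}^\infty$ be a sequence of polynomials in $\mathbb{K}[q]$ satisfying $f_{mn}(q)=f_m(q)f_n(q^m)$ for all $m,n\in\mathbb N$. Suppose $\mathrm{supp}(\mathcal F)=S(P)$ for an infinite set $P$ of prime numbers, and $f_p(0)=1$ for all $p\in P$. Then there exists a formal power series $F_P(q)\in\mathbb{K}[[q]]$ such that \[ F_P(q)=\lim_{\substack{p\to\infty\\ p\in P}}f_p(q), \] i.e. for every $N$ there is $p_0$ such that $f_p(q)\equiv F_P(q)\pmod{q^N}$ for all $p\in P$ with $p\ge p_0$.
   Context: $\mathbb N=\{1,2,3,\dots\}$. $\mathrm{supp}(\mathcal F)=\{n\in\mathbb N: f_n(q)\ne0\}$. For a set $P$ of primes, $S(P)$ is the multiplicative semigroup of positive integers generated by $P$ (all finite products of elements of $P$, including $1$). For power series $g,h$, $g\equiv h\pmod{q^N}$ means their coefficients of $q^0,\dots,q^{N-1}$ agree. *)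

theory Defs
  imports "HOL-Computational_Algebra.Computational_Algebra"
begin

inductive_set gen_semigroup :: "nat set \<Rightarrow> nat set" for P :: "nat set" where
  one: "1 \<in> gen_semigroup P"
| mult: "n \<in> gen_semigroup P \<Longrightarrow> p \<in> P \<Longrightarrow> n * p \<in> gen_semigroup P"

definition supp_seq :: "(nat \<Rightarrow> 'a::zero) \<Rightarrow> nat set" where
  "supp_seq f = {n. n \<ge> 1 \<and> f n \<noteq> 0}"

end

theory Submission
  imports Defs
begin

lemma coeff_pcomp_monom:
  fixes r :: "'a::field poly"
  assumes "m \<ge> 1" "j < m"
  shows "coeff (pcompose r (monom 1 m)) j = (if j = 0 then coeff r 0 else 0)"
proof (induction r rule: pCons_induct)
  case 0
  then show ?case by simp
next
  case (pCons a p)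
  have "pcompose (pCons a p) (monom 1 m) = [:a:] + monom 1 m * pcompose p (monom 1 m)"
    by (simp add: pcompose_pCons)
  then show ?case using assms by (auto simp: coeff_monom_mult coeff_pCons split: nat.splits)
qed

lemma coeff_low:
  fixes a r :: "'a::field poly"
  assumes "m \<ge> 1" "k < m" "poly r 0 = 1"
  shows "coeff (a * pcompose r (monom 1 m)) k = coeff a k"
proof -
  have "coeff (a * pcompose r (monom 1 m)) k
        = (\<Sum>i\<le>k. coeff a i * coeff (pcompose r (monom 1 m)) (k - i))"
    by (simp add: coeff_mult)
  also have "\<dots> = (\<Sum>i\<le>k. if i = k then coeff a i else 0)"
    using assms by (intro sum.cong) (auto simp: coeff_pcomp_monom poly_0_coeff_0)
  also have "\<dots> = coeff a k" by simp
  finally show ?thesis .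
qed

theorem mainTheorem5:
  fixes f :: "nat \<Rightarrow> 'a::field poly" and P :: "nat set"
  assumes mult: "\<And>m n. m \<ge> 1 \<Longrightarrow> n \<ge> 1 \<Longrightarrow>
                   f (m * n) = f m * pcompose (f n) (monom 1 m)"
    and primes: "\<forall>p\<in>P. prime p"
    and inf: "infinite P"
    and supp: "supp_seq f = gen_semigroup P"
    and const: "\<And>p. p \<in> P \<Longrightarrow> poly (f p) 0 = 1"
  shows "\<exists>F :: 'a fps. \<forall>N. \<exists>p0. \<forall>p\<in>P. p \<ge> p0 \<longrightarrow>
           (\<forall>k<N. coeff (f p) k = fps_nth F k)"
proof -
  have agree: "coeff (f p) k = coeff (f q) k" if "p \<in> P" "q \<in> P" "k < p" "k < q" for p q k
  proof -
    have p1: "p \<ge> 1" "q \<ge> 1" using primes that prime_gt_0_nat by (auto simp: Suc_le_eq)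
    have "coeff (f p) k = coeff (f (p * q)) k"
      using mult[OF p1] coeff_low[OF p1(1) that(3) const[OF that(2)]] by simp
    also have "\<dots> = coeff (f (q * p)) k" by (simp add: mult.commute)
    also have "\<dots> = coeff (f q) k"
      using mult[OF p1(2) p1(1)] coeff_low[OF p1(2) that(4) const[OF that(1)]] by simp
    finally show ?thesis .
  qed
  have ex: "\<exists>p\<in>P. k < p" for k :: nat
    using inf by (meson finite_nat_set_iff_bounded not_le_imp_less le_less_trans less_Suc_eq_le not_less)
  define pk where "pk k = (SOME p. p \<in> P \<and> k < p)" for k
  have pk: "pk k \<in> P \<and> k < pk k" for k
    unfolding pk_def using someI_ex[OF ex[of k, unfolded Bex_def]] .
  show ?thesis
  proof (intro exI allI ballI impI)
    fix N k p assume "p \<in> P" "N \<le> p" "k < N"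
    then show "coeff (f p) k = fps_nth (Abs_fps (\<lambda>k. coeff (f (pk k)) k)) k"
      using agree[of p "pk k" k] pk[of k] by simp
  qed
qed

end
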